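(* Let $Y$ be a positive integrable random variable with mean $m$ and $X=Y-m$. In each of the following cases $X$ is heavy on left: (i) $Y$ has a Gamma distribution with parameters $a,\lambda>0$ (in particular an exponential distribution with parameter $\lambda>0$); (ii) $Y=a\exp(Z)$ with $a>0$ and $Z$ exponential with parameter $\lambda>0$ (Pareto distribution), whenever $Y$ is integrable; (iii) $Y=\exp(Z)$ with $Z\sim\mathcal{N}(\mu,\sigma^2)$, $\mu\in\mathbb{R}$, $\sigma^2>0$ (log-normal distribution).
   Context: For $a>0$ let $T_a(X)=\min(|X|,a)\,\mathrm{sign}(X)$. An integrable random variable $X$ is called heavy on left if $\mathbb{E}[X]=0$ and $\mathbb{E}[T_a(X)]\le0$ for all $a>0$. *)

theory Defs
  imports "HOL-Probability.Probability"
begin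

definition trunc_at :: "real \<Rightarrow> real \<Rightarrow> real" where
  "trunc_at a x = min \<bar>x\<bar> a * sgn x"

definition heavy_on_left :: "'a measure \<Rightarrow> ('a \<Rightarrow> real) \<Rightarrow> bool" where
  "heavy_on_left M X \<longleftrightarrow> integrable M X \<and> (\<integral>\<omega>. X \<omega> \<partial>M) = 0 \<and>
     (\<forall>a>0. (\<integral>\<omega>. trunc_at a (X \<omega>) \<partial>M) \<le> 0)"

definition gamma_density :: "real \<Rightarrow> real \<Rightarrow> real \<Rightarrow> real" where
  "gamma_density a l x =
     (if x \<le> 0 then 0 else l powr a * x powr (a - 1) * exp (- l * x) / Gamma a)"

end

theory Submission
  imports Defs
begin

lemma gamma_density_measurable[measurable]: "gamma_density a l \<in> borel_measurable borel"
proof -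
  define C where "C = l powr a / Gamma a"
  have "gamma_density a l = (\<lambda>x. if x \<le> 0 then 0 else C * (exp ((a - 1) * ln x) * exp (- l * x)))"
  proof
    fix x show "gamma_density a l x = (if x \<le> 0 then 0 else C * (exp ((a - 1) * ln x) * exp (- l * x)))"
      unfolding gamma_density_def C_def by (simp add: powr_def)
  qed
  moreover have "(\<lambda>x::real. if x \<le> 0 then 0 else C * (exp ((a - 1) * ln x) * exp (- l * x))) \<in> borel_measurable borel"
    by (intro borel_measurable_if_D measurable_If) auto
  ultimately show ?thesis by (simp only:)
qed

lemma trunc_diff:
  fixes c1 c2 x :: real
  assumes "0 \<le> c1" "c1 \<le> c2"
  shows "trunc_at c2 x - trunc_at c1 x = min (max (x - c1) 0) (c2 - c1) - min (max (- x - c1) 0) (c2 - c1)"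
  using assms by (auto simp: trunc_at_def sgn_if min_def max_def)

lemma lint_ind_Iio:
  fixes c1 c2 x :: real
  assumes "c1 \<le> c2"
  shows "(\<integral>t. indicator ({c1..c2} \<inter> {..<x}) t \<partial>lborel) = min (max (x - c1) 0) (c2 - c1)"
proof -
  have "x \<le> c1 \<or> (c1 < x \<and> x \<le> c2) \<or> c2 < x" by linarith
  then consider "x \<le> c1" | "c1 < x \<and> x \<le> c2" | "c2 < x" by blast
  then show ?thesis
  proof cases
    case 1 then have "{c1..c2} \<inter> {..<x} = {}" by auto
    then show ?thesis using 1 assms by simp
  next
    case 2 then have "{c1..c2} \<inter> {..<x} = {c1..<x}" by auto
    then show ?thesis using 2 by (simp add: measure_def)
  next
    case 3 then have "{c1..c2} \<inter> {..<x} = {c1..c2}" by auto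
    then show ?thesis using 3 assms by (simp add: measure_def)
  qed
qed

lemma inner_t:
  fixes c1 c2 x :: real
  assumes "0 \<le> c1" "c1 \<le> c2"
  shows "(\<integral>t. indicator ({c1..c2} \<inter> {..<x}) t - indicator ({c1..c2} \<inter> {..<-x}) t \<partial>lborel)
     = trunc_at c2 x - trunc_at c1 x"
proof -
  have i1: "integrable lborel (indicator ({c1..c2} \<inter> {..<y}) :: real \<Rightarrow> real)" for y
  proof (rule integrable_real_indicator)
    have "emeasure lborel ({c1..c2} \<inter> {..<y}) \<le> emeasure lborel {c1..c2}" by (rule emeasure_mono) auto
    then show "emeasure lborel ({c1..c2} \<inter> {..<y}) < \<infinity>" using emeasure_lborel_Icc_eq[of c1 c2] by (simp add: le_less_trans)
  qed auto
  show ?thesis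
    unfolding Bochner_Integration.integral_diff[OF i1 i1] lint_ind_Iio[OF assms(2)] trunc_diff[OF assms] ..
qed

lemma key_fubini:
  fixes X :: "'a \<Rightarrow> real" and c1 c2 :: real
  assumes P: "prob_space M" and X[measurable]: "X \<in> borel_measurable M" and c: "0 \<le> c1" "c1 \<le> c2"
  shows "(\<integral>\<omega>. trunc_at c2 (X \<omega>) - trunc_at c1 (X \<omega>) \<partial>M) =
    (\<integral>t. indicator {c1..c2} t * (measure M {\<omega>\<in>space M. t < X \<omega>} - measure M {\<omega>\<in>space M. X \<omega> < -t}) \<partial>lborel)"
proof -
  interpret prob_space M by (rule P)
  interpret pair_sigma_finite lborel M by unfold_locales
  define f where "f = (\<lambda>(t::real,\<omega>). (if c1 \<le> t \<and> t \<le> c2 \<and> t < X \<omega> then 1 else 0) -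
       (if c1 \<le> t \<and> t \<le> c2 \<and> t < - X \<omega> then 1 else (0::real)))"
  have fm[measurable]: "f \<in> borel_measurable (lborel \<Otimes>\<^sub>M M)"
    unfolding f_def by measurable
  have "(\<integral>\<^sup>+x. ennreal (norm (f x)) \<partial>(lborel \<Otimes>\<^sub>M M)) \<le> (\<integral>\<^sup>+x. indicator ({c1..c2} \<times> space M) x \<partial>(lborel \<Otimes>\<^sub>M M))"
    by (rule nn_integral_mono) (auto simp: f_def indicator_def space_pair_measure split: if_splits)
  also have "\<dots> = emeasure (lborel \<Otimes>\<^sub>M M) ({c1..c2} \<times> space M)"
    by (rule nn_integral_indicator) (rule pair_measureI, auto)
  also have "\<dots> = ennreal (c2 - c1)"
    using c sigma_finite_measure.emeasure_pair_measure_Times[OF prob_space_imp_sigma_finite[OF P], of "{c1..c2}" lborel "space M"] by (simp add: emeasure_space_1)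
  finally have "(\<integral>\<^sup>+x. ennreal (norm (f x)) \<partial>(lborel \<Otimes>\<^sub>M M)) < \<infinity>"
    by (simp add: le_less_trans)
  then have fi: "integrable (lborel \<Otimes>\<^sub>M M) (\<lambda>(t,\<omega>). f (t,\<omega>))"
    by (intro integrableI_bounded) auto
  have "(\<integral>\<omega>. (\<integral>t. f (t,\<omega>) \<partial>lborel) \<partial>M) = (\<integral>t. (\<integral>\<omega>. f (t,\<omega>) \<partial>M) \<partial>lborel)"
    by (rule Fubini_integral[of "\<lambda>t \<omega>. f (t,\<omega>)"]) (use fi in simp)
  also have "(\<integral>\<omega>. (\<integral>t. f (t,\<omega>) \<partial>lborel) \<partial>M) = (\<integral>\<omega>. trunc_at c2 (X \<omega>) - trunc_at c1 (X \<omega>) \<partial>M)"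
  proof (rule Bochner_Integration.integral_cong[OF refl])
    fix \<omega> assume "\<omega> \<in> space M"
    have "(\<lambda>t. f (t,\<omega>)) = (\<lambda>t. indicator ({c1..c2} \<inter> {..<X \<omega>}) t - indicator ({c1..c2} \<inter> {..<-X \<omega>}) t)"
      by (auto simp: f_def indicator_def)
    then show "(\<integral>t. f (t,\<omega>) \<partial>lborel) = trunc_at c2 (X \<omega>) - trunc_at c1 (X \<omega>)"
      using inner_t[OF c] by simp
  qed
  also have "(\<integral>t. (\<integral>\<omega>. f (t,\<omega>) \<partial>M) \<partial>lborel) = (\<integral>t. indicator {c1..c2} t * (measure M {\<omega>\<in>space M. t < X \<omega>} - measure M {\<omega>\<in>space M. X \<omega> < -t}) \<partial>lborel)"
  proof (rule Bochner_Integration.integral_cong[OF refl])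
    fix t :: real
    have A: "{\<omega>\<in>space M. t < X \<omega>} \<in> sets M" "{\<omega>\<in>space M. X \<omega> < -t} \<in> sets M" by measurable
    have "(\<integral>\<omega>. f (t,\<omega>) \<partial>M) = (\<integral>\<omega>. indicator {c1..c2} t * (indicator {\<omega>\<in>space M. t < X \<omega>} \<omega> - indicator {\<omega>\<in>space M. X \<omega> < -t} \<omega>) \<partial>M)"
      by (rule Bochner_Integration.integral_cong[OF refl]) (auto simp: f_def indicator_def)
    also have "\<dots> = indicator {c1..c2} t * ((\<integral>\<omega>. indicator {\<omega>\<in>space M. t < X \<omega>} \<omega> \<partial>M) - (\<integral>\<omega>. indicator {\<omega>\<in>space M. X \<omega> < -t} \<omega> \<partial>M))"
    proof -
      have I: "integrable M (indicator B :: 'a \<Rightarrow> real)" if "B \<in> sets M" for B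
        by (rule integrable_real_indicator) (use that in \<open>auto simp: less_top[symmetric]\<close>)
      show ?thesis
        by (simp only: Bochner_Integration.integral_mult_right_zero Bochner_Integration.integral_diff[OF I[OF A(1)] I[OF A(2)]])
    qed
    also have "\<dots> = indicator {c1..c2} t * (measure M {\<omega>\<in>space M. t < X \<omega>} - measure M {\<omega>\<in>space M. X \<omega> < -t})"
      using A by (simp add: Int_absorb2 sets.sets_into_space)
    finally show "(\<integral>\<omega>. f (t,\<omega>) \<partial>M) = indicator {c1..c2} t * (measure M {\<omega>\<in>space M. t < X \<omega>} - measure M {\<omega>\<in>space M. X \<omega> < -t})" .
  qed
  finally show ?thesis by simp
qed

lemma trunc_at_0[simp]: "trunc_at 0 x = 0"
  by (simp add: trunc_at_def)

lemma abs_trunc_at_le: "0 \<le> a \<Longrightarrow> \<bar>trunc_at a x\<bar> \<le> \<bar>x\<bar>"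
  by (simp add: trunc_at_def abs_mult abs_sgn_eq)

lemma trunc_at_measurable[measurable]: "trunc_at a \<in> borel_measurable borel"
  unfolding trunc_at_def by measurable

lemma trunc_at_tendsto: "(\<lambda>i. trunc_at (real i) x) \<longlonglongrightarrow> x"
proof (rule tendsto_eventually)
  show "\<forall>\<^sub>F i in sequentially. trunc_at (real i) x = x"
  proof (rule eventually_sequentiallyI[of "nat \<lceil>\<bar>x\<bar>\<rceil>"])
    fix i assume "nat \<lceil>\<bar>x\<bar>\<rceil> \<le> i"
    then have "real (nat \<lceil>\<bar>x\<bar>\<rceil>) \<le> real i" by (rule of_nat_mono)
    moreover have "\<bar>x\<bar> \<le> real (nat \<lceil>\<bar>x\<bar>\<rceil>)" by (rule real_nat_ceiling_ge)
    ultimately have "\<bar>x\<bar> \<le> real i" by linarith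
    then show "trunc_at (real i) x = x"
      by (auto simp: trunc_at_def sgn_if)
  qed
qed

lemma heavy_crit:
  fixes X :: "'a \<Rightarrow> real"
  assumes P: "prob_space M" and Xm[measurable]: "X \<in> borel_measurable M" and Xi: "integrable M X"
    and E0: "(\<integral>\<omega>. X \<omega> \<partial>M) = 0"
    and sc: "\<And>s t. 0 \<le> s \<Longrightarrow> s \<le> t \<Longrightarrow>
       measure M {\<omega>\<in>space M. X \<omega> < -s} < measure M {\<omega>\<in>space M. s < X \<omega>} \<Longrightarrow>
       measure M {\<omega>\<in>space M. X \<omega> < -t} \<le> measure M {\<omega>\<in>space M. t < X \<omega>}"
  shows "heavy_on_left M X"
proof -
  define h where "h t = measure M {\<omega>\<in>space M. t < X \<omega>} - measure M {\<omega>\<in>space M. X \<omega> < -t}" for t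
  have Ti: "integrable M (\<lambda>\<omega>. trunc_at a (X \<omega>))" if "0 \<le> a" for a
  proof (rule Bochner_Integration.integrable_bound[OF Xi])
    show "(\<lambda>\<omega>. trunc_at a (X \<omega>)) \<in> borel_measurable M" by measurable
    show "AE \<omega> in M. norm (trunc_at a (X \<omega>)) \<le> norm (X \<omega>)"
      by (intro AE_I2) (simp add: abs_trunc_at_le[OF that])
  qed
  have K: "(\<integral>\<omega>. trunc_at c2 (X \<omega>) \<partial>M) - (\<integral>\<omega>. trunc_at c1 (X \<omega>) \<partial>M) = (\<integral>t. indicator {c1..c2} t * h t \<partial>lborel)"
    if "0 \<le> c1" "c1 \<le> c2" for c1 c2
  proof -
    have c2: "0 \<le> c2" using that by simp
    have "(\<integral>\<omega>. trunc_at c2 (X \<omega>) \<partial>M) - (\<integral>\<omega>. trunc_at c1 (X \<omega>) \<partial>M) = (\<integral>\<omega>. trunc_at c2 (X \<omega>) - trunc_at c1 (X \<omega>) \<partial>M)"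
      by (rule Bochner_Integration.integral_diff[OF Ti[OF c2] Ti[OF that(1)], symmetric])
    also have "\<dots> = (\<integral>t. indicator {c1..c2} t * (measure M {\<omega>\<in>space M. t < X \<omega>} - measure M {\<omega>\<in>space M. X \<omega> < -t}) \<partial>lborel)"
      by (rule key_fubini[OF P Xm that])
    finally show ?thesis unfolding h_def .
  qed
  have "(\<integral>\<omega>. trunc_at c (X \<omega>) \<partial>M) \<le> 0" if c: "0 < c" for c
  proof (cases "\<forall>t\<in>{0..c}. h t \<le> 0")
    case True
    have "(\<integral>\<omega>. trunc_at c (X \<omega>) \<partial>M) = (\<integral>t. indicator {0..c} t * h t \<partial>lborel)"
      using K[of 0 c] c by simp
    also have "\<dots> = - (\<integral>t. indicator {0..c} t * (- h t) \<partial>lborel)"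
      by simp
    also have "\<dots> \<le> 0"
    proof -
      have "0 \<le> (\<integral>t. indicator {0..c} t * (- h t) \<partial>lborel)"
        using True by (intro Bochner_Integration.integral_nonneg) (auto simp: indicator_def)
      then show ?thesis by simp
    qed
    finally show ?thesis .
  next
    case False
    then obtain s where s0: "s \<in> {0..c}" "\<not> h s \<le> 0" by blast
    then have s: "0 \<le> s" "s \<le> c" "0 < h s" by auto
    have hs: "measure M {\<omega>\<in>space M. X \<omega> < -s} < measure M {\<omega>\<in>space M. s < X \<omega>}"
      using s(3) unfolding h_def by simp
    have hpos: "0 \<le> h t" if "c \<le> t" for t
    proof -
      have "s \<le> t" using s(2) that by (rule order.trans)
      then have "measure M {\<omega>\<in>space M. X \<omega> < -t} \<le> measure M {\<omega>\<in>space M. t < X \<omega>}"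
        by (rule sc[OF s(1) _ hs])
      then show ?thesis unfolding h_def by simp
    qed
    have lim: "(\<lambda>i. \<integral>\<omega>. trunc_at (real i) (X \<omega>) \<partial>M) \<longlonglongrightarrow> (\<integral>\<omega>. X \<omega> \<partial>M)"
    proof (rule integral_dominated_convergence[where w="\<lambda>\<omega>. \<bar>X \<omega>\<bar>"])
      show "X \<in> borel_measurable M" by (rule Xm)
      show "(\<lambda>\<omega>. trunc_at (real i) (X \<omega>)) \<in> borel_measurable M" for i by measurable
      show "integrable M (\<lambda>\<omega>. \<bar>X \<omega>\<bar>)" using Xi by (rule integrable_abs)
      show "AE \<omega> in M. (\<lambda>i. trunc_at (real i) (X \<omega>)) \<longlonglongrightarrow> X \<omega>"
        by (intro AE_I2) (rule trunc_at_tendsto)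
      show "AE \<omega> in M. norm (trunc_at (real i) (X \<omega>)) \<le> \<bar>X \<omega>\<bar>" for i
        by (intro AE_I2) (simp add: abs_trunc_at_le)
    qed
    have "(\<integral>\<omega>. trunc_at c (X \<omega>) \<partial>M) \<le> 0"
    proof (rule LIMSEQ_le_const[OF lim[unfolded E0]])
      show "\<exists>N. \<forall>n\<ge>N. (\<integral>\<omega>. trunc_at c (X \<omega>) \<partial>M) \<le> (\<integral>\<omega>. trunc_at (real n) (X \<omega>) \<partial>M)"
      proof (intro exI allI impI)
        fix n assume n: "nat \<lceil>c\<rceil> \<le> n"
        then have "real (nat \<lceil>c\<rceil>) \<le> real n" by (rule of_nat_mono)
        moreover have "c \<le> real (nat \<lceil>c\<rceil>)" by (rule real_nat_ceiling_ge)
        ultimately have cn: "c \<le> real n" by linarith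
        have "0 \<le> (\<integral>t. indicator {c..real n} t * h t \<partial>lborel)"
          using hpos by (intro Bochner_Integration.integral_nonneg) (simp add: indicator_def)
        then show "(\<integral>\<omega>. trunc_at c (X \<omega>) \<partial>M) \<le> (\<integral>\<omega>. trunc_at (real n) (X \<omega>) \<partial>M)"
          using K[of c "real n"] c cn by simp
      qed
    qed
    then show ?thesis .
  qed
  then show ?thesis
    unfolding heavy_on_left_def using Xi E0 by auto
qed



lemma affine_refl:
  fixes g :: "real \<Rightarrow> real"
  assumes [measurable]: "g \<in> borel_measurable borel"
  shows "(\<integral>\<^sup>+y. ennreal (g y) * indicator {m+t1..m+t2} y \<partial>lborel) = (\<integral>\<^sup>+u. ennreal (g (m + u)) * indicator {t1..t2} u \<partial>lborel)"
    and "(\<integral>\<^sup>+y. ennreal (g y) * indicator {m-t2..m-t1} y \<partial>lborel) = (\<integral>\<^sup>+u. ennreal (g (m - u)) * indicator {t1..t2} u \<partial>lborel)"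
proof -
  have "(\<integral>\<^sup>+y. ennreal (g y) * indicator {m+t1..m+t2} y \<partial>lborel) = (\<integral>\<^sup>+u. ennreal (g (m + u)) * indicator {m+t1..m+t2} (m + u) \<partial>lborel)"
    using nn_integral_real_affine[of "\<lambda>y. ennreal (g y) * indicator {m+t1..m+t2} y" 1 m] by simp
  also have "\<dots> = (\<integral>\<^sup>+u. ennreal (g (m + u)) * indicator {t1..t2} u \<partial>lborel)"
    by (auto intro!: nn_integral_cong simp: indicator_def)
  finally show "(\<integral>\<^sup>+y. ennreal (g y) * indicator {m+t1..m+t2} y \<partial>lborel) = (\<integral>\<^sup>+u. ennreal (g (m + u)) * indicator {t1..t2} u \<partial>lborel)" .
  have "(\<integral>\<^sup>+y. ennreal (g y) * indicator {m-t2..m-t1} y \<partial>lborel) = (\<integral>\<^sup>+u. ennreal (g (m - u)) * indicator {m-t2..m-t1} (m - u) \<partial>lborel)"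
    using nn_integral_real_affine[of "\<lambda>y. ennreal (g y) * indicator {m-t2..m-t1} y" "-1" m] by simp
  also have "\<dots> = (\<integral>\<^sup>+u. ennreal (g (m - u)) * indicator {t1..t2} u \<partial>lborel)"
    by (auto intro!: nn_integral_cong simp: indicator_def)
  finally show "(\<integral>\<^sup>+y. ennreal (g y) * indicator {m-t2..m-t1} y \<partial>lborel) = (\<integral>\<^sup>+u. ennreal (g (m - u)) * indicator {t1..t2} u \<partial>lborel)" .
qed

lemma crossing_from_density:
  fixes Y :: "'a \<Rightarrow> real" and g :: "real \<Rightarrow> real" and m :: real
  assumes P: "prob_space M" and Ym[measurable]: "Y \<in> borel_measurable M"
    and gm[measurable]: "g \<in> borel_measurable borel"
    and Ypos: "measure M {\<omega>\<in>space M. Y \<omega> \<le> 0} = 0"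
    and dens: "\<And>c d. c \<le> d \<Longrightarrow> emeasure M {\<omega>\<in>space M. c \<le> Y \<omega> \<and> Y \<omega> \<le> d} = (\<integral>\<^sup>+y. ennreal (g y) * indicator {c..d} y \<partial>lborel)"
    and gsc: "\<And>u v. 0 < u \<Longrightarrow> u \<le> v \<Longrightarrow> g (m - u) < g (m + u) \<Longrightarrow> g (m - v) \<le> g (m + v)"
    and st: "0 \<le> s" "s \<le> t"
    and hs: "measure M {\<omega>\<in>space M. Y \<omega> - m < -s} < measure M {\<omega>\<in>space M. s < Y \<omega> - m}"
  shows "measure M {\<omega>\<in>space M. Y \<omega> - m < -t} \<le> measure M {\<omega>\<in>space M. t < Y \<omega> - m}"
proof -
  interpret prob_space M by (rule P)
  define F where "F x = prob {\<omega>\<in>space M. Y \<omega> \<le> x}" for x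
  have atom: "prob {\<omega>\<in>space M. Y \<omega> = x} = 0" for x
  proof -
    have "emeasure M {\<omega>\<in>space M. Y \<omega> = x} = emeasure M {\<omega>\<in>space M. x \<le> Y \<omega> \<and> Y \<omega> \<le> x}"
      by (intro arg_cong[where f="emeasure M"]) auto
    also have "\<dots> = (\<integral>\<^sup>+y. ennreal (g y) * indicator {x..x} y \<partial>lborel)" by (rule dens) simp
    also have "\<dots> = (\<integral>\<^sup>+y. ennreal (g x) * indicator {x} y \<partial>lborel)"
      by (auto intro!: nn_integral_cong simp: indicator_def)
    also have "\<dots> = 0" by simp
    finally show ?thesis by (simp add: emeasure_eq_measure)
  qed
  have F1: "prob {\<omega>\<in>space M. Y \<omega> < x} = F x" for x
  proof -
    have "F x = prob ({\<omega>\<in>space M. Y \<omega> < x} \<union> {\<omega>\<in>space M. Y \<omega> = x})"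
      unfolding F_def by (intro arg_cong[where f=prob]) auto
    also have "\<dots> = prob {\<omega>\<in>space M. Y \<omega> < x} + prob {\<omega>\<in>space M. Y \<omega> = x}"
      by (rule finite_measure_Union) auto
    finally show ?thesis using atom by simp
  qed
  have F2: "prob {\<omega>\<in>space M. x < Y \<omega>} = 1 - F x" for x
  proof -
    have "{\<omega>\<in>space M. x < Y \<omega>} = space M - {\<omega>\<in>space M. Y \<omega> \<le> x}" by auto
    then show ?thesis unfolding F_def by (simp add: prob_compl)
  qed
  have F3: "prob {\<omega>\<in>space M. c \<le> Y \<omega> \<and> Y \<omega> \<le> d} = F d - F c" if "c \<le> d" for c d
  proof -
    have "F d = prob ({\<omega>\<in>space M. Y \<omega> < c} \<union> {\<omega>\<in>space M. c \<le> Y \<omega> \<and> Y \<omega> \<le> d})"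
      unfolding F_def using that by (intro arg_cong[where f=prob]) auto
    also have "\<dots> = prob {\<omega>\<in>space M. Y \<omega> < c} + prob {\<omega>\<in>space M. c \<le> Y \<omega> \<and> Y \<omega> \<le> d}"
      by (rule finite_measure_Union) auto
    finally show ?thesis using F1 by simp
  qed
  define h where "h x = (1 - F (m + x)) - F (m - x)" for x
  have hdef: "prob {\<omega>\<in>space M. x < Y \<omega> - m} - prob {\<omega>\<in>space M. Y \<omega> - m < -x} = h x" for x
  proof -
    have "{\<omega>\<in>space M. x < Y \<omega> - m} = {\<omega>\<in>space M. m + x < Y \<omega>}" "{\<omega>\<in>space M. Y \<omega> - m < -x} = {\<omega>\<in>space M. Y \<omega> < m - x}"
      by auto
    then show ?thesis unfolding h_def using F1 F2 by simp
  qed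
  have hdiff: "h t1 - h t2 = prob {\<omega>\<in>space M. m + t1 \<le> Y \<omega> \<and> Y \<omega> \<le> m + t2} - prob {\<omega>\<in>space M. m - t2 \<le> Y \<omega> \<and> Y \<omega> \<le> m - t1}"
    if "t1 \<le> t2" for t1 t2
    using that F3[of "m+t1" "m+t2"] F3[of "m-t2" "m-t1"] unfolding h_def by simp
  have EP: "emeasure M A = ennreal (prob A)" for A by (rule emeasure_eq_measure)
  have cmp1: "prob {\<omega>\<in>space M. m + t1 \<le> Y \<omega> \<and> Y \<omega> \<le> m + t2} \<le> prob {\<omega>\<in>space M. m - t2 \<le> Y \<omega> \<and> Y \<omega> \<le> m - t1}"
    if "t1 \<le> t2" "\<And>u. t1 \<le> u \<Longrightarrow> u \<le> t2 \<Longrightarrow> g (m + u) \<le> g (m - u)" for t1 t2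
  proof -
    have "emeasure M {\<omega>\<in>space M. m + t1 \<le> Y \<omega> \<and> Y \<omega> \<le> m + t2} = (\<integral>\<^sup>+u. ennreal (g (m + u)) * indicator {t1..t2} u \<partial>lborel)"
      using dens[of "m+t1" "m+t2"] affine_refl(1)[OF gm, of m t1 t2] that by simp
    also have "\<dots> \<le> (\<integral>\<^sup>+u. ennreal (g (m - u)) * indicator {t1..t2} u \<partial>lborel)"
      using that by (intro nn_integral_mono) (auto simp: indicator_def intro!: ennreal_leI)
    also have "\<dots> = emeasure M {\<omega>\<in>space M. m - t2 \<le> Y \<omega> \<and> Y \<omega> \<le> m - t1}"
      using dens[of "m-t2" "m-t1"] affine_refl(2)[OF gm, of m t2 t1] that by simp
    finally show ?thesis unfolding EP by (simp add: ennreal_le_iff)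
  qed
  have cmp2: "prob {\<omega>\<in>space M. m - t2 \<le> Y \<omega> \<and> Y \<omega> \<le> m - t1} \<le> prob {\<omega>\<in>space M. m + t1 \<le> Y \<omega> \<and> Y \<omega> \<le> m + t2}"
    if "t1 \<le> t2" "\<And>u. t1 \<le> u \<Longrightarrow> u \<le> t2 \<Longrightarrow> g (m - u) \<le> g (m + u)" for t1 t2
  proof -
    have "emeasure M {\<omega>\<in>space M. m - t2 \<le> Y \<omega> \<and> Y \<omega> \<le> m - t1} = (\<integral>\<^sup>+u. ennreal (g (m - u)) * indicator {t1..t2} u \<partial>lborel)"
      using dens[of "m-t2" "m-t1"] affine_refl(2)[OF gm, of m t2 t1] that by simp
    also have "\<dots> \<le> (\<integral>\<^sup>+u. ennreal (g (m + u)) * indicator {t1..t2} u \<partial>lborel)"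
      using that by (intro nn_integral_mono) (auto simp: indicator_def intro!: ennreal_leI)
    also have "\<dots> = emeasure M {\<omega>\<in>space M. m + t1 \<le> Y \<omega> \<and> Y \<omega> \<le> m + t2}"
      using dens[of "m+t1" "m+t2"] affine_refl(1)[OF gm, of m t1 t2] that by simp
    finally show ?thesis unfolding EP by (simp add: ennreal_le_iff)
  qed
  have "0 \<le> h t"
  proof (cases "\<forall>u. s \<le> u \<and> u \<le> t \<longrightarrow> g (m + u) \<le> g (m - u)")
    case True
    have "h s - h t \<le> 0" using hdiff[OF st(2)] cmp1[OF st(2)] True by simp
    moreover have "0 < h s" using hs hdef[of s] by simp
    ultimately show ?thesis by simp
  next
    case False
    then obtain u0 where u0: "s \<le> u0" "u0 \<le> t" "g (m - u0) < g (m + u0)" by (auto simp: not_le)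
    have "u0 \<noteq> 0" using u0 by auto
    then have u0p: "0 < u0" using u0 st by simp
    define T where "T = max t m"
    have "h T - h t \<le> 0"
    proof -
      have "t \<le> T" unfolding T_def by simp
      moreover have "g (m - u) \<le> g (m + u)" if "t \<le> u" "u \<le> T" for u
        using gsc[OF u0p _ u0(3), of u] that u0 by simp
      ultimately show ?thesis using hdiff[of t T] cmp2[of t T] by simp
    qed
    moreover have "0 \<le> h T"
    proof -
      have "F (m - T) \<le> F 0"
        unfolding F_def T_def by (intro finite_measure_mono) auto
      moreover have "F (m + T) \<le> 1" unfolding F_def by simp
      moreover have "0 \<le> F (m - T)" unfolding F_def by simp
      ultimately show ?thesis using Ypos unfolding h_def F_def by simp
    qed
    ultimately show ?thesis by simp
  qed
  then show ?thesis using hdef[of t] by simp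
qed



lemma exp_transform_dens_pos:
  fixes Z Y :: "'a \<Rightarrow> real" and fz :: "real \<Rightarrow> real" and k :: real
  assumes Zd: "distributed M lborel Z (\<lambda>x. ennreal (fz x))" and fzm[measurable]: "fz \<in> borel_measurable borel"
    and k: "0 < k" and Y: "\<And>\<omega>. Y \<omega> = k * exp (Z \<omega>)"
    and cd: "0 < c" "c \<le> d"
  shows "emeasure M {\<omega>\<in>space M. c \<le> Y \<omega> \<and> Y \<omega> \<le> d} =
    (\<integral>\<^sup>+ y. ennreal (if 0 < y then fz (ln (y / k)) / y else 0) * indicator {c..d} y \<partial>lborel)"
proof -
  define g where "g y = (if 0 < y then fz (ln (y / k)) / y else 0)" for y
  have gm[measurable]: "g \<in> borel_measurable borel" unfolding g_def by measurable
  define \<alpha> where "\<alpha> = ln (c / k)"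
  define \<beta> where "\<beta> = ln (d / k)"
  have d0: "0 < d" using cd by simp
  have ab: "\<alpha> \<le> \<beta>" unfolding \<alpha>_def \<beta>_def using cd k by (simp add: divide_right_mono)
  have ga: "k * exp \<alpha> = c" and gb: "k * exp \<beta> = d" unfolding \<alpha>_def \<beta>_def using cd k d0 by simp_all
  have "{\<omega>\<in>space M. c \<le> Y \<omega> \<and> Y \<omega> \<le> d} = Z -` {\<alpha>..\<beta>} \<inter> space M"
  proof -
    have "c \<le> k * exp z \<longleftrightarrow> \<alpha> \<le> z" for z
      using ga k by (metis exp_le_cancel_iff mult_le_cancel_left_pos)
    moreover have "k * exp z \<le> d \<longleftrightarrow> z \<le> \<beta>" for z
      using gb k by (metis exp_le_cancel_iff mult_le_cancel_left_pos)
    ultimately show ?thesis using Y by auto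
  qed
  then have "emeasure M {\<omega>\<in>space M. c \<le> Y \<omega> \<and> Y \<omega> \<le> d} = (\<integral>\<^sup>+z. ennreal (fz z) * indicator {\<alpha>..\<beta>} z \<partial>lborel)"
    using distributed_emeasure[OF Zd, of "{\<alpha>..\<beta>}"] by simp
  also have "\<dots> = (\<integral>\<^sup>+z. ennreal (g (k * exp z) * (k * exp z) * indicator {\<alpha>..\<beta>} z) \<partial>lborel)"
    using k by (intro nn_integral_cong) (auto simp: g_def indicator_def)
  also have "\<dots> = (\<integral>\<^sup>+y. ennreal (g y * indicator {k * exp \<alpha>..k * exp \<beta>} y) \<partial>lborel)"
  proof (rule nn_integral_substitution[symmetric, where g'="\<lambda>z. k * exp z"])
    show "set_borel_measurable borel {k * exp \<alpha>..k * exp \<beta>} g"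
      unfolding set_borel_measurable_def by measurable
    show "((\<lambda>z. k * exp z) has_real_derivative k * exp x) (at x)" for x
      by (auto intro!: derivative_eq_intros)
    show "continuous_on {\<alpha>..\<beta>} (\<lambda>z. k * exp z)"
      by (intro continuous_intros)
  qed (use k ab in auto)
  also have "\<dots> = (\<integral>\<^sup>+y. ennreal (g y) * indicator {c..d} y \<partial>lborel)"
    unfolding ga gb by (intro nn_integral_cong) (auto simp: indicator_def)
  finally show ?thesis unfolding g_def .
qed

lemma exp_transform_dens:
  fixes Z Y :: "'a \<Rightarrow> real" and fz :: "real \<Rightarrow> real" and k :: real
  assumes Zd: "distributed M lborel Z (\<lambda>x. ennreal (fz x))" and fzm[measurable]: "fz \<in> borel_measurable borel"
    and k: "0 < k" and Y: "\<And>\<omega>. Y \<omega> = k * exp (Z \<omega>)"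
    and cd: "c \<le> d"
  shows "emeasure M {\<omega>\<in>space M. c \<le> Y \<omega> \<and> Y \<omega> \<le> d} =
    (\<integral>\<^sup>+ y. ennreal (if 0 < y then fz (ln (y / k)) / y else 0) * indicator {c..d} y \<partial>lborel)"
proof -
  define g where "g y = (if 0 < y then fz (ln (y / k)) / y else 0)" for y
  have gm[measurable]: "g \<in> borel_measurable borel" unfolding g_def by measurable
  have Zm[measurable]: "Z \<in> borel_measurable M" using distributed_measurable[OF Zd] by simp
  have Ym[measurable]: "Y \<in> borel_measurable M" unfolding Y[abs_def] by measurable
  have Ypos: "0 < Y \<omega>" for \<omega> using Y k by simp
  consider "0 < c" | "d \<le> 0" | "c \<le> 0" "0 < d" by linarith
  then show ?thesis
  proof cases
    case 1 then show ?thesis using exp_transform_dens_pos[OF Zd fzm k Y 1 cd] by simp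
  next
    case 2
    have E: "{\<omega>\<in>space M. c \<le> Y \<omega> \<and> Y \<omega> \<le> d} = {}" using 2 Ypos by (auto simp: not_le) (meson less_le_trans not_le)
    have I: "(\<integral>\<^sup>+ y. ennreal (g y) * indicator {c..d} y \<partial>lborel) = 0"
      using 2 by (subst nn_integral_0_iff_AE) (auto simp: g_def indicator_def)
    show ?thesis using I unfolding E g_def by simp
  next
    case 3
    define cn where "cn n = d * exp (- real n)" for n :: nat
    have cnpos: "0 < cn n" for n unfolding cn_def using 3 by simp
    have cnle: "cn n \<le> d" for n unfolding cn_def using 3 by simp
    have cnmono: "cn (Suc n) \<le> cn n" for n unfolding cn_def using 3 by simp
    define A where "A n = {\<omega>\<in>space M. cn n \<le> Y \<omega> \<and> Y \<omega> \<le> d}" for n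
    define B where "B n = {cn n..d}" for n
    have dec: "decseq cn" by (rule decseq_SucI) (rule cnmono)
    have incA: "incseq A" unfolding A_def incseq_def using decseqD[OF dec] by (force intro: order.trans)
    have incB: "incseq B" unfolding B_def incseq_def using decseqD[OF dec] by force
    have ex: "\<exists>n. cn n \<le> y" if "0 < y" for y
    proof -
      obtain n :: nat where n: "- ln (y / d) \<le> real n" using real_arch_simple by blast
      have "exp (- real n) \<le> exp (ln (y / d))" using n by simp
      then have "exp (- real n) \<le> y / d" using that 3 by simp
      then have "cn n \<le> y" unfolding cn_def using 3 by (simp add: field_simps)
      then show ?thesis ..
    qed
    have UA: "(\<Union>n. A n) = {\<omega>\<in>space M. c \<le> Y \<omega> \<and> Y \<omega> \<le> d}"
      unfolding A_def using ex Ypos 3 cnpos by (auto intro: order.trans[of c 0] less_imp_le)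
    have UB: "(\<Union>n. B n) = {0<..d}"
      unfolding B_def using ex cnpos by (auto intro: less_le_trans[OF cnpos])
    have "emeasure M {\<omega>\<in>space M. c \<le> Y \<omega> \<and> Y \<omega> \<le> d} = (SUP n. emeasure M (A n))"
      unfolding UA[symmetric] using incA unfolding A_def by (intro SUP_emeasure_incseq[symmetric]) auto
    also have "\<dots> = (SUP n. emeasure (density lborel g) (B n))"
      unfolding A_def B_def
      by (subst emeasure_density) (auto simp: exp_transform_dens_pos[OF Zd fzm k Y cnpos cnle] g_def)
    also have "\<dots> = emeasure (density lborel g) (\<Union>n. B n)"
      using incB unfolding B_def by (intro SUP_emeasure_incseq) auto
    also have "\<dots> = (\<integral>\<^sup>+ y. ennreal (g y) * indicator {0<..d} y \<partial>lborel)"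
      unfolding UB by (subst emeasure_density) auto
    also have "\<dots> = (\<integral>\<^sup>+ y. ennreal (g y) * indicator {c..d} y \<partial>lborel)"
      using 3 by (intro nn_integral_cong) (auto simp: g_def indicator_def)
    finally show ?thesis unfolding g_def .
  qed
qed



lemma phi_convex:
  fixes m :: real assumes "0 < m"
  shows "convex_on {0..<m} (\<lambda>x. ln (m + x) - ln (m - x))"
proof (rule convex_on_realI[where f'="\<lambda>x. 1 / (m + x) + 1 / (m - x)"])
  show "connected {0..<m}" by simp
  fix x assume x: "x \<in> {0..<m}"
  show "((\<lambda>x. ln (m + x) - ln (m - x)) has_real_derivative 1 / (m + x) + 1 / (m - x)) (at x)"
    using x assms by (auto intro!: derivative_eq_intros simp: field_simps)
next
  fix x y assume x: "x \<in> {0..<m}" and y: "y \<in> {0..<m}" and xy: "x \<le> y"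
  have e: "1 / (m + z) + 1 / (m - z) = 2 * m / ((m + z) * (m - z))" if "z \<in> {0..<m}" for z
    using that assms by (auto simp: field_simps)
  have "(m + y) * (m - y) \<le> (m + x) * (m - x)"
    using x y xy by (simp add: algebra_simps) (metis mult_mono x y xy atLeastLessThan_iff)
  moreover have "0 < (m + y) * (m - y)" using y assms by auto
  ultimately have "2 * m / ((m + x) * (m - x)) \<le> 2 * m / ((m + y) * (m - y))"
    using assms by (intro frac_le) auto
  then show "1 / (m + x) + 1 / (m - x) \<le> 1 / (m + y) + 1 / (m - y)"
    using e[OF x] e[OF y] by simp
qed

lemma phi_slope:
  fixes m u v :: real assumes "0 < u" "u \<le> v" "v < m"
  shows "v * (ln (m + u) - ln (m - u)) \<le> u * (ln (m + v) - ln (m - v))"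
proof -
  have m: "0 < m" using assms by simp
  have "(\<lambda>x. ln (m + x) - ln (m - x)) ((1 - u / v) *\<^sub>R 0 + (u / v) *\<^sub>R v) \<le>
      (1 - u / v) * (\<lambda>x. ln (m + x) - ln (m - x)) 0 + (u / v) * (\<lambda>x. ln (m + x) - ln (m - x)) v"
    by (rule convex_onD[OF phi_convex[OF m]]) (use assms in auto)
  then have "ln (m + u) - ln (m - u) \<le> (u / v) * (ln (m + v) - ln (m - v))"
    using assms by simp
  then have "v * (ln (m + u) - ln (m - u)) \<le> v * ((u / v) * (ln (m + v) - ln (m - v)))"
    using assms by (intro mult_left_mono) auto
  then show ?thesis using assms by simp
qed

lemma gamma_density_nonneg: "0 < a \<Longrightarrow> 0 \<le> gamma_density a l x"
  by (auto simp: gamma_density_def intro!: divide_nonneg_pos Gamma_real_pos)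

lemma gamma_density_exp:
  assumes "0 < a" "0 < l" "0 < y"
  shows "gamma_density a l y = l powr a / Gamma a * exp ((a - 1) * ln y - l * y)"
proof -
  have 1: "y powr (a - 1) = exp ((a - 1) * ln y)" using assms by (simp add: powr_def)
  have 2: "exp ((a - 1) * ln y - l * y) = exp ((a - 1) * ln y) * exp (- l * y)"
    by (simp add: exp_add[symmetric] algebra_simps)
  show ?thesis unfolding gamma_density_def using assms 1 2 by simp
qed

lemma gamma_shape:
  fixes a l m u v :: real
  assumes a: "0 < a" and l: "0 < l" and uv: "0 < u" "u \<le> v"
    and lt: "gamma_density a l (m - u) < gamma_density a l (m + u)"
  shows "gamma_density a l (m - v) \<le> gamma_density a l (m + v)"
proof (cases "m - v \<le> 0")
  case True
  then show ?thesis using gamma_density_nonneg[OF a] by (simp add: gamma_density_def)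
next
  case False
  then have pos: "0 < m - v" "0 < m - u" "0 < m + u" "0 < m + v" using uv by auto
  define K where "K = l powr a / Gamma a"
  have K: "0 < K" unfolding K_def using a l Gamma_real_pos[OF a] by simp
  define E where "E y = (a - 1) * ln y - l * y" for y
  have gd: "gamma_density a l y = K * exp (E y)" if "0 < y" for y
    unfolding K_def E_def using gamma_density_exp[OF a l that] .
  have "E (m - u) < E (m + u)" using lt gd pos K by simp
  then have h1: "2 * l * u < (a - 1) * (ln (m + u) - ln (m - u))"
    unfolding E_def by (simp add: algebra_simps)
  have "ln (m - u) < ln (m + u)" using pos uv by simp
  then have phipos: "0 < ln (m + u) - ln (m - u)" by simp
  have a1: "0 < a - 1"
  proof (rule ccontr)
    assume "\<not> 0 < a - 1"
    then have "(a - 1) * (ln (m + u) - ln (m - u)) \<le> 0"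
      using phipos by (simp add: mult_nonpos_nonneg)
    moreover have "0 < 2 * l * u" using l uv by simp
    ultimately show False using h1 by simp
  qed
  have sl: "v * (ln (m + u) - ln (m - u)) \<le> u * (ln (m + v) - ln (m - v))"
    by (rule phi_slope) (use uv pos in auto)
  have "u * (2 * l * v) = v * (2 * l * u)" by simp
  also have "\<dots> < v * ((a - 1) * (ln (m + u) - ln (m - u)))"
    using h1 uv by (intro mult_strict_left_mono) auto
  also have "\<dots> = (a - 1) * (v * (ln (m + u) - ln (m - u)))" by simp
  also have "\<dots> \<le> (a - 1) * (u * (ln (m + v) - ln (m - v)))"
    using sl a1 by (intro mult_left_mono) auto
  also have "\<dots> = u * ((a - 1) * (ln (m + v) - ln (m - v)))" by simp
  finally have "2 * l * v < (a - 1) * (ln (m + v) - ln (m - v))"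
    using uv by (simp add: mult_less_cancel_left_pos)
  then have "E (m - v) < E (m + v)" unfolding E_def by (simp add: algebra_simps)
  then show ?thesis using gd pos K by simp
qed



lemma pareto_shape:
  fixes k l m u v :: real
  defines "g \<equiv> \<lambda>y. if 0 < y then exponential_density l (ln (y / k)) / y else 0"
  assumes k: "0 < k" and l: "0 < l" and uv: "0 < u" "u \<le> v"
    and lt: "g (m - u) < g (m + u)"
  shows "g (m - v) \<le> g (m + v)"
proof -
  have gnn: "0 \<le> g y" for y unfolding g_def using exponential_density_nonneg[OF l] by simp
  show ?thesis
  proof (cases "m - v \<le> 0")
    case True then show ?thesis using gnn by (simp add: g_def)
  next
    case False
    then have pos: "0 < m - v" "0 < m - u" "0 < m + u" using uv by auto
    have "m - u < k"
    proof (rule ccontr)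
      assume "\<not> m - u < k"
      then have ku: "k \<le> m - u" by simp
      have l1: "0 \<le> ln ((m - u) / k)" using ku k by simp
      have l2: "ln ((m - u) / k) \<le> ln ((m + u) / k)" using pos uv k by (simp add: divide_right_mono)
      have "exp (- ln ((m + u) / k) * l) \<le> exp (- ln ((m - u) / k) * l)"
        using l2 l by simp
      moreover have "1 / (m + u) \<le> 1 / (m - u)" using pos uv by (simp add: frac_le)
      ultimately have "l * exp (- ln ((m + u) / k) * l) * (1 / (m + u)) \<le> l * exp (- ln ((m - u) / k) * l) * (1 / (m - u))"
        using l pos by (intro mult_mono) auto
      then have "g (m + u) \<le> g (m - u)"
        using l1 l2 pos unfolding g_def exponential_density_def by simp
      then show False using lt by simp
    qed
    then have "ln ((m - v) / k) < 0" using pos uv k by simp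
    then have "g (m - v) = 0" unfolding g_def exponential_density_def by simp
    then show ?thesis using gnn by simp
  qed
qed

lemma lognormal_shape:
  fixes \<mu> \<sigma> m u v :: real
  defines "g \<equiv> \<lambda>y. if 0 < y then normal_density \<mu> \<sigma> (ln (y / 1)) / y else 0"
  assumes s: "0 < \<sigma>" and uv: "0 < u" "u \<le> v"
    and lt: "g (m - u) < g (m + u)"
  shows "g (m - v) \<le> g (m + v)"
proof (cases "m - v \<le> 0")
  case True then show ?thesis by (simp add: g_def)
next
  case False
  then have pos: "0 < m - v" "0 < m - u" "0 < m + u" "0 < m + v" using uv by auto
  define C where "C = 1 / sqrt (2 * pi * \<sigma>\<^sup>2)"
  have C: "0 < C" unfolding C_def using s by simp
  define Q where "Q t = - (t - \<mu>)\<^sup>2 / (2 * \<sigma>\<^sup>2) - t" for t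
  have gq: "g y = C * exp (Q (ln y))" if "0 < y" for y
  proof -
    have "exp (Q (ln y)) = exp (- (ln y - \<mu>)\<^sup>2 / (2 * \<sigma>\<^sup>2)) / y"
      unfolding Q_def using that by (simp add: exp_diff)
    then show ?thesis unfolding g_def C_def normal_density_def using that by simp
  qed
  have key: "2 * \<sigma>\<^sup>2 * (Q B - Q A) = (A - B) * (A + B - 2 * \<mu> + 2 * \<sigma>\<^sup>2)" for A B
  proof -
    have "2 * \<sigma>\<^sup>2 * (Q B - Q A) = (A - \<mu>)\<^sup>2 - (B - \<mu>)\<^sup>2 + 2 * \<sigma>\<^sup>2 * (A - B)"
      unfolding Q_def using s by (simp add: diff_divide_distrib right_diff_distrib)
    also have "\<dots> = (A - B) * (A + B - 2 * \<mu> + 2 * \<sigma>\<^sup>2)"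
      by (simp add: power2_eq_square algebra_simps)
    finally show ?thesis .
  qed
  have s2: "0 < 2 * \<sigma>\<^sup>2" using s by simp
  have "Q (ln (m - u)) < Q (ln (m + u))" using lt gq pos C by simp
  then have "0 < 2 * \<sigma>\<^sup>2 * (Q (ln (m + u)) - Q (ln (m - u)))" using s2 by simp
  then have neg1: "0 < (ln (m - u) - ln (m + u)) * (ln (m - u) + ln (m + u) - 2 * \<mu> + 2 * \<sigma>\<^sup>2)"
    by (simp only: key)
  have d1: "ln (m - u) - ln (m + u) < 0" using pos uv by simp
  have c1: "ln (m - u) + ln (m + u) - 2 * \<mu> + 2 * \<sigma>\<^sup>2 < 0"
  proof -
    have "(0 < ln (m - u) - ln (m + u) \<and> 0 < ln (m - u) + ln (m + u) - 2 * \<mu> + 2 * \<sigma>\<^sup>2) \<or>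
          (ln (m - u) - ln (m + u) < 0 \<and> ln (m - u) + ln (m + u) - 2 * \<mu> + 2 * \<sigma>\<^sup>2 < 0)"
      using neg1 zero_less_mult_iff by blast
    then show ?thesis using d1 by linarith
  qed
  have "ln (m - v) + ln (m + v) = ln ((m - v) * (m + v))" using pos by (simp add: ln_mult)
  also have "\<dots> \<le> ln ((m - u) * (m + u))"
  proof -
    have "u * u \<le> v * v" using uv by (intro mult_mono) auto
    then have "(m - v) * (m + v) \<le> (m - u) * (m + u)" by (simp add: algebra_simps)
    moreover have "0 < (m - v) * (m + v)" using pos by simp
    ultimately show ?thesis by simp
  qed
  also have "\<dots> = ln (m - u) + ln (m + u)" using pos by (simp add: ln_mult)
  finally have c2: "ln (m - v) + ln (m + v) - 2 * \<mu> + 2 * \<sigma>\<^sup>2 < 0" using c1 by simp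
  have d2: "ln (m - v) - ln (m + v) < 0" using pos uv by simp
  have "0 < (ln (m - v) - ln (m + v)) * (ln (m - v) + ln (m + v) - 2 * \<mu> + 2 * \<sigma>\<^sup>2)"
    by (rule mult_neg_neg[OF d2 c2])
  then have "0 < 2 * \<sigma>\<^sup>2 * (Q (ln (m + v)) - Q (ln (m - v)))" by (simp only: key)
  then have "Q (ln (m - v)) < Q (ln (m + v))" using s2 by (simp add: zero_less_mult_iff)
  then show ?thesis using gq pos C by simp
qed


lemma heavy_from_density:
  fixes Y :: "'a \<Rightarrow> real" and g :: "real \<Rightarrow> real"
  assumes P: "prob_space M" and Ym[measurable]: "Y \<in> borel_measurable M" and Yi: "integrable M Y"
    and gm[measurable]: "g \<in> borel_measurable borel"
    and Ypos: "measure M {\<omega>\<in>space M. Y \<omega> \<le> 0} = 0"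
    and dens: "\<And>c d. c \<le> d \<Longrightarrow> emeasure M {\<omega>\<in>space M. c \<le> Y \<omega> \<and> Y \<omega> \<le> d} = (\<integral>\<^sup>+y. ennreal (g y) * indicator {c..d} y \<partial>lborel)"
    and gsc: "\<And>m u v. 0 < u \<Longrightarrow> u \<le> v \<Longrightarrow> g (m - u) < g (m + u) \<Longrightarrow> g (m - v) \<le> g (m + v)"
  shows "heavy_on_left M (\<lambda>\<omega>. Y \<omega> - (\<integral>\<omega>'. Y \<omega>' \<partial>M))"
proof -
  interpret prob_space M by (rule P)
  define m where "m = (\<integral>\<omega>'. Y \<omega>' \<partial>M)"
  have Xi: "integrable M (\<lambda>\<omega>. Y \<omega> - m)"
    by (intro Bochner_Integration.integrable_diff Yi) simp
  have E0: "(\<integral>\<omega>. Y \<omega> - m \<partial>M) = 0"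
    using Yi by (simp add: Bochner_Integration.integral_diff m_def prob_space)
  have "heavy_on_left M (\<lambda>\<omega>. Y \<omega> - m)"
  proof (rule heavy_crit[OF P _ Xi E0])
    show "(\<lambda>\<omega>. Y \<omega> - m) \<in> borel_measurable M" by measurable
    fix s t :: real assume st: "0 \<le> s" "s \<le> t"
      and hs: "measure M {\<omega>\<in>space M. Y \<omega> - m < -s} < measure M {\<omega>\<in>space M. s < Y \<omega> - m}"
    show "measure M {\<omega>\<in>space M. Y \<omega> - m < -t} \<le> measure M {\<omega>\<in>space M. t < Y \<omega> - m}"
    proof (rule crossing_from_density[OF P Ym gm Ypos _ _ st hs])
      fix c d :: real assume "c \<le> d"
      then show "emeasure M {\<omega>\<in>space M. c \<le> Y \<omega> \<and> Y \<omega> \<le> d} = (\<integral>\<^sup>+y. ennreal (g y) * indicator {c..d} y \<partial>lborel)"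
        by (rule dens)
    next
      fix u v :: real assume "0 < u" "u \<le> v" "g (m - u) < g (m + u)"
      then show "g (m - v) \<le> g (m + v)" by (rule gsc)
    qed
  qed
  then show ?thesis unfolding m_def .
qed

theorem mainTheorem14:
  fixes M :: "'a measure"
  assumes "prob_space M"
  shows
    "(\<forall>(Y :: 'a \<Rightarrow> real) a l. 0 < a \<and> 0 < l \<and>
        distributed M lborel Y (gamma_density a l) \<and> integrable M Y \<longrightarrow>
        heavy_on_left M (\<lambda>\<omega>. Y \<omega> - (\<integral>\<omega>'. Y \<omega>' \<partial>M)))
   \<and> (\<forall>(Y :: 'a \<Rightarrow> real) (Z :: 'a \<Rightarrow> real) a l. 0 < a \<and> 0 < l \<and>
        distributed M lborel Z (exponential_density l) \<and> (\<forall>\<omega>. Y \<omega> = a * exp (Z \<omega>)) \<and>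
        integrable M Y \<longrightarrow>
        heavy_on_left M (\<lambda>\<omega>. Y \<omega> - (\<integral>\<omega>'. Y \<omega>' \<partial>M)))
   \<and> (\<forall>(Y :: 'a \<Rightarrow> real) (Z :: 'a \<Rightarrow> real) \<mu> \<sigma>. 0 < \<sigma> \<and>
        distributed M lborel Z (normal_density \<mu> \<sigma>) \<and> (\<forall>\<omega>. Y \<omega> = exp (Z \<omega>)) \<and>
        integrable M Y \<longrightarrow>
        heavy_on_left M (\<lambda>\<omega>. Y \<omega> - (\<integral>\<omega>'. Y \<omega>' \<partial>M)))"
proof (intro conjI allI impI; elim conjE)
  note P = assms
  interpret prob_space M by (rule P)
  fix Y :: "'a \<Rightarrow> real" and a l :: real
  assume a: "0 < a" and l: "0 < l" and Yd: "distributed M lborel Y (gamma_density a l)" and Yi: "integrable M Y"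
  have Ym[measurable]: "Y \<in> borel_measurable M" using distributed_measurable[OF Yd] by simp
  show "heavy_on_left M (\<lambda>\<omega>. Y \<omega> - (\<integral>\<omega>'. Y \<omega>' \<partial>M))"
  proof (rule heavy_from_density[OF P Ym Yi gamma_density_measurable])
    have "emeasure M {\<omega>\<in>space M. Y \<omega> \<le> 0} = emeasure M (Y -` {..0} \<inter> space M)"
      by (intro arg_cong[where f="emeasure M"]) auto
    also have "\<dots> = (\<integral>\<^sup>+y. ennreal (gamma_density a l y) * indicator {..0} y \<partial>lborel)"
      by (rule distributed_emeasure[OF Yd]) simp
    also have "\<dots> = 0"
      by (subst nn_integral_0_iff_AE) (auto simp: gamma_density_def indicator_def)
    finally show "measure M {\<omega>\<in>space M. Y \<omega> \<le> 0} = 0" by (simp add: measure_def)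
  next
    fix c d :: real assume "c \<le> d"
    have "emeasure M {\<omega>\<in>space M. c \<le> Y \<omega> \<and> Y \<omega> \<le> d} = emeasure M (Y -` {c..d} \<inter> space M)"
      by (intro arg_cong[where f="emeasure M"]) auto
    also have "\<dots> = (\<integral>\<^sup>+y. ennreal (gamma_density a l y) * indicator {c..d} y \<partial>lborel)"
      by (rule distributed_emeasure[OF Yd]) simp
    finally show "emeasure M {\<omega>\<in>space M. c \<le> Y \<omega> \<and> Y \<omega> \<le> d} = (\<integral>\<^sup>+y. ennreal (gamma_density a l y) * indicator {c..d} y \<partial>lborel)" .
  next
    fix m u v :: real assume "0 < u" "u \<le> v" "gamma_density a l (m - u) < gamma_density a l (m + u)"
    then show "gamma_density a l (m - v) \<le> gamma_density a l (m + v)"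
      using gamma_shape[OF a l] by blast
  qed
next
  note P = assms
  interpret prob_space M by (rule P)
  fix Y Z :: "'a \<Rightarrow> real" and a l :: real
  assume a: "0 < a" and l: "0 < l" and Zd: "distributed M lborel Z (exponential_density l)"
    and Yeq: "\<forall>\<omega>. Y \<omega> = a * exp (Z \<omega>)" and Yi: "integrable M Y"
  have Zm[measurable]: "Z \<in> borel_measurable M" using distributed_measurable[OF Zd] by simp
  have Ym[measurable]: "Y \<in> borel_measurable M"
  proof -
    have "Y = (\<lambda>\<omega>. a * exp (Z \<omega>))" using Yeq by auto
    then show ?thesis by simp
  qed
  define g where "g y = (if 0 < y then exponential_density l (ln (y / a)) / y else 0)" for y
  have gm[measurable]: "g \<in> borel_measurable borel" unfolding g_def by measurable
  show "heavy_on_left M (\<lambda>\<omega>. Y \<omega> - (\<integral>\<omega>'. Y \<omega>' \<partial>M))"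
  proof (rule heavy_from_density[OF P Ym Yi gm])
    have E: "{\<omega>\<in>space M. Y \<omega> \<le> 0} = {}" using Yeq a by (auto simp: not_le)
    show "measure M {\<omega>\<in>space M. Y \<omega> \<le> 0} = 0" unfolding E by simp
  next
    fix c d :: real assume cd: "c \<le> d"
    show "emeasure M {\<omega>\<in>space M. c \<le> Y \<omega> \<and> Y \<omega> \<le> d} = (\<integral>\<^sup>+y. ennreal (g y) * indicator {c..d} y \<partial>lborel)"
      unfolding g_def
      by (rule exp_transform_dens[OF Zd _ a _ cd]) (use Yeq in auto)
  next
    fix m u v :: real assume "0 < u" "u \<le> v" "g (m - u) < g (m + u)"
    then show "g (m - v) \<le> g (m + v)"
      using pareto_shape[OF a l, of u v m] unfolding g_def by blast
  qed
next
  note P = assms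
  interpret prob_space M by (rule P)
  fix Y Z :: "'a \<Rightarrow> real" and \<mu> \<sigma> :: real
  assume s: "0 < \<sigma>" and Zd: "distributed M lborel Z (normal_density \<mu> \<sigma>)"
    and Yeq: "\<forall>\<omega>. Y \<omega> = exp (Z \<omega>)" and Yi: "integrable M Y"
  have Zm[measurable]: "Z \<in> borel_measurable M" using distributed_measurable[OF Zd] by simp
  have Ym[measurable]: "Y \<in> borel_measurable M"
  proof -
    have "Y = (\<lambda>\<omega>. exp (Z \<omega>))" using Yeq by auto
    then show ?thesis by simp
  qed
  define g where "g y = (if 0 < y then normal_density \<mu> \<sigma> (ln (y / 1)) / y else 0)" for y
  have gm[measurable]: "g \<in> borel_measurable borel" unfolding g_def by measurable
  show "heavy_on_left M (\<lambda>\<omega>. Y \<omega> - (\<integral>\<omega>'. Y \<omega>' \<partial>M))"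
  proof (rule heavy_from_density[OF P Ym Yi gm])
    have E: "{\<omega>\<in>space M. Y \<omega> \<le> 0} = {}" using Yeq by (auto simp: not_le)
    show "measure M {\<omega>\<in>space M. Y \<omega> \<le> 0} = 0" unfolding E by simp
  next
    fix c d :: real assume cd: "c \<le> d"
    show "emeasure M {\<omega>\<in>space M. c \<le> Y \<omega> \<and> Y \<omega> \<le> d} = (\<integral>\<^sup>+y. ennreal (g y) * indicator {c..d} y \<partial>lborel)"
      unfolding g_def
      by (rule exp_transform_dens[OF Zd _ zero_less_one _ cd]) (use Yeq in auto)
  next
    fix m u v :: real assume "0 < u" "u \<le> v" "g (m - u) < g (m + u)"
    then show "g (m - v) \<le> g (m + v)"
      using lognormal_shape[OF s, of u v m] unfolding g_def by blast
  qed
qed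

end
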